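(* Let $p$ be a prime, $A$ a commutative ring with $\mathbb{Q}\subseteq A$, and $|$ a $p$-archimedean $p$-divisibility on $A$. For $a\in A$ put $\mathrm{ord}\,a=\sup\{m\in\mathbb{Z};\ p^m|a\}\in\mathbb{Z}\cup\{\infty\}$ and $\|a\|=p^{-\mathrm{ord}\,a}$ (with $p^{-\infty}=0$). Then for all $a,b\in A$ and $r\in\mathbb{Q}$: (a) $\|a+b\|\le\max(\|a\|,\|b\|)$; (b) $\|ab\|\le\|a\|\,\|b\|$; (c) $\|r\|=|r|_p$; (d) $\|ra\|=|r|_p\|a\|$.
   Context: A divisibility on $A$ is a binary relation $|\subseteq A\times A$ such that for all $a,b,c$: (1) $a|a$; (2) $a|b,\ b|c\Rightarrow a|c$; (3) $a|b,\ a|c\Rightarrow a|b-c$; (4) $a|b\Rightarrow ac|bc$; (5) $0\nmid1$. A $p$-divisibility additionally satisfies for all $a,b$: (6) $0\nmid a\Rightarrow pa\nmid a$; (7) $p[(a^pb-b^pa)^2-(b^{p+1})^2]\ \big|\ (a^pb-b^pa)b^{p+1}$. It is $p$-archimedean if for every $a$ there is $m\in\mathbb{Z}$ with $p^m|a$. $|r|_p=p^{-v_p(r)}$ is the $p$-adic absolute value. *)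

theory Defs
  imports Complex_Main "HOL-Library.Extended_Real" "HOL-Computational_Algebra.Primes"
begin

definition contains_rat :: "'a::comm_ring_1 itself \<Rightarrow> bool" where
  "contains_rat _ \<longleftrightarrow> (\<forall>n::nat. n > 0 \<longrightarrow> (\<exists>x::'a. of_nat n * x = 1))"

text \<open>The canonical embedding of Q into A (inverse of the denominator chosen by SOME;
  it is unique in a commutative ring).\<close>
definition rat_emb :: "rat \<Rightarrow> 'a::comm_ring_1" where
  "rat_emb r = (let (n, d) = quotient_of r in of_int n * (SOME y. of_int d * y = 1))"

definition ppow :: "nat \<Rightarrow> int \<Rightarrow> 'a::comm_ring_1" where
  "ppow p m = rat_emb ((of_nat p :: rat) powi m)"

definition divisibility :: "('a::comm_ring_1 \<Rightarrow> 'a \<Rightarrow> bool) \<Rightarrow> bool" where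
  "divisibility dv \<longleftrightarrow>
     (\<forall>a. dv a a) \<and>
     (\<forall>a b c. dv a b \<longrightarrow> dv b c \<longrightarrow> dv a c) \<and>
     (\<forall>a b c. dv a b \<longrightarrow> dv a c \<longrightarrow> dv a (b - c)) \<and>
     (\<forall>a b c. dv a b \<longrightarrow> dv (a * c) (b * c)) \<and>
     \<not> dv 0 1"

definition p_divisibility :: "nat \<Rightarrow> ('a::comm_ring_1 \<Rightarrow> 'a \<Rightarrow> bool) \<Rightarrow> bool" where
  "p_divisibility p dv \<longleftrightarrow> divisibility dv \<and>
     (\<forall>a. \<not> dv 0 a \<longrightarrow> \<not> dv (of_nat p * a) a) \<and>
     (\<forall>a b. dv (of_nat p * ((a ^ p * b - b ^ p * a) ^ 2 - (b ^ (p + 1)) ^ 2))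
               ((a ^ p * b - b ^ p * a) * b ^ (p + 1)))"

definition p_archimedean :: "nat \<Rightarrow> ('a::comm_ring_1 \<Rightarrow> 'a \<Rightarrow> bool) \<Rightarrow> bool" where
  "p_archimedean p dv \<longleftrightarrow> (\<forall>a. \<exists>m::int. dv (ppow p m) a)"

definition ord_dv :: "nat \<Rightarrow> ('a::comm_ring_1 \<Rightarrow> 'a \<Rightarrow> bool) \<Rightarrow> 'a \<Rightarrow> ereal" where
  "ord_dv p dv a = Sup ((\<lambda>m. ereal (real_of_int m)) ` {m::int. dv (ppow p m) a})"

definition norm_dv :: "nat \<Rightarrow> ('a::comm_ring_1 \<Rightarrow> 'a \<Rightarrow> bool) \<Rightarrow> 'a \<Rightarrow> real" where
  "norm_dv p dv a = (if ord_dv p dv a = \<infinity> then 0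
                     else real p powr (- real_of_ereal (ord_dv p dv a)))"

definition padic_val :: "nat \<Rightarrow> rat \<Rightarrow> int" where
  "padic_val p r = (let (n, d) = quotient_of r in
      int (multiplicity (int p) n) - int (multiplicity (int p) d))"

definition padic_abs :: "nat \<Rightarrow> rat \<Rightarrow> real" where
  "padic_abs p r = (if r = 0 then 0 else real p powr (- real_of_int (padic_val p r)))"

end

theory Submission imports Defs begin

locale L =
  fixes p :: nat and dv :: "'a::comm_ring_1 \<Rightarrow> 'a \<Rightarrow> bool"
  assumes prime: "prime p" and crat: "contains_rat TYPE('a)"
    and pdiv: "p_divisibility p dv" and arch: "p_archimedean p dv"
begin

lemma inv_ex: "d > 0 \<Longrightarrow> \<exists>y::'a. of_int d * y = 1"
proof -
  assume d: "d > 0"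
  hence "nat d > 0" by simp
  then obtain x :: 'a where "of_nat (nat d) * x = 1" using crat unfolding contains_rat_def by blast
  moreover have "(of_nat (nat d) :: 'a) = of_int d" using d by simp
  ultimately show ?thesis by auto
qed

lemma emb_char:
  assumes "d > 0" "of_int d * x = (of_int n :: 'a)" "r = of_int n / of_int d"
  shows "rat_emb r = x"
proof -
  obtain n' d' where q: "quotient_of r = (n', d')" by (cases "quotient_of r") auto
  have d': "d' > 0" using quotient_of_denom_pos[OF q] .
  have r': "r = of_int n' / of_int d'" using quotient_of_div[OF q] .
  define y' where "y' = (SOME y. of_int d' * y = (1::'a))"
  have y': "of_int d' * y' = 1" unfolding y'_def using someI_ex[OF inv_ex[OF d']] .
  have e: "rat_emb r = of_int n' * y'" unfolding rat_emb_def q y'_def by simp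
  obtain y where y: "of_int d * y = (1::'a)" using inv_ex[OF assms(1)] by blast
  have "(of_int n / of_int d :: rat) = of_int n' / of_int d'" using assms(3) r' by simp
  hence "rat_of_int n * rat_of_int d' = rat_of_int n' * rat_of_int d" using assms(1) d'
    by (simp add: frac_eq_eq)
  hence nd: "n * d' = n' * d" by (simp only: of_int_mult[symmetric] of_int_eq_iff)
  have "x = y * (of_int d * x)" using y by (simp add: algebra_simps)
  also have "\<dots> = of_int n * y" using assms(2) by (simp add: algebra_simps)
  finally have x: "x = of_int n * y" .
  have "of_int n' * y' = of_int n' * y' * (of_int d * y)" using y by simp
  also have "\<dots> = of_int (n' * d) * y' * y" by (simp add: algebra_simps)
  also have "\<dots> = of_int n * (of_int d' * y') * y" unfolding nd[symmetric] by (simp add: algebra_simps)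
  also have "\<dots> = of_int n * y" using y' by simp
  finally show ?thesis using e x by simp
qed

lemma emb_eq:
  assumes "d > 0" "r = of_int n / of_int d"
  shows "of_int d * rat_emb r = (of_int n :: 'a)"
proof -
  obtain y where y: "of_int d * y = (1::'a)" using inv_ex[OF assms(1)] by blast
  have c: "of_int d * (of_int n * y) = of_int n * (of_int d * (y::'a))" by (rule mult.left_commute)
  have "rat_emb r = (of_int n * y :: 'a)"
    by (rule emb_char[OF assms(1) _ assms(2)]) (use y c in simp)
  thus ?thesis using y c by simp
qed

lemma qrep: fixes r :: rat obtains n d where "d > 0" "r = of_int n / of_int d"
proof -
  obtain n d where q: "quotient_of r = (n, d)" by (cases "quotient_of r") auto
  show ?thesis using that[OF quotient_of_denom_pos[OF q] quotient_of_div[OF q]] .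
qed

lemma emb_mult: "(rat_emb (r * s) :: 'a) = rat_emb r * rat_emb s"
proof -
  obtain n1 d1 where 1: "d1 > 0" "r = of_int n1 / of_int d1" by (rule qrep)
  obtain n2 d2 where 2: "d2 > 0" "s = of_int n2 / of_int d2" by (rule qrep)
  have e1: "of_int d1 * rat_emb r = (of_int n1 :: 'a)" using emb_eq[OF 1] .
  have e2: "of_int d2 * rat_emb s = (of_int n2 :: 'a)" using emb_eq[OF 2] .
  show ?thesis
  proof (rule emb_char[of "d1*d2" _ "n1*n2"])
    show "of_int (d1 * d2) * (rat_emb r * rat_emb s) = (of_int (n1 * n2) :: 'a)"
    proof -
      have "of_int (d1 * d2) * (rat_emb r * rat_emb s) = (of_int d1 * rat_emb r) * (of_int d2 * (rat_emb s :: 'a))"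
        by (simp add: algebra_simps)
      thus ?thesis using e1 e2 by simp
    qed
  qed (use 1 2 in auto)
qed

lemma emb_add: "(rat_emb (r + s) :: 'a) = rat_emb r + rat_emb s"
proof -
  obtain n1 d1 where 1: "d1 > 0" "r = of_int n1 / of_int d1" by (rule qrep)
  obtain n2 d2 where 2: "d2 > 0" "s = of_int n2 / of_int d2" by (rule qrep)
  have e1: "of_int d1 * rat_emb r = (of_int n1 :: 'a)" using emb_eq[OF 1] .
  have e2: "of_int d2 * rat_emb s = (of_int n2 :: 'a)" using emb_eq[OF 2] .
  show ?thesis
  proof (rule emb_char[of "d1*d2" _ "n1*d2 + n2*d1"])
    have "of_int (d1 * d2) * (rat_emb r + rat_emb s) = of_int d2 * (of_int d1 * rat_emb r) + of_int d1 * (of_int d2 * rat_emb s :: 'a)"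
      by (simp add: algebra_simps)
    also have "\<dots> = of_int d2 * of_int n1 + of_int d1 * of_int n2" using e1 e2 by simp
    finally show "of_int (d1 * d2) * (rat_emb r + rat_emb s) = (of_int (n1*d2 + n2*d1) :: 'a)"
      by (simp add: algebra_simps)
    show "r + s = of_int (n1 * d2 + n2 * d1) / of_int (d1 * d2)" using 1 2 by (simp add: field_simps)
  qed (use 1 2 in auto)
qed

lemma emb_int: "(rat_emb (of_int n) :: 'a) = of_int n"
  by (rule emb_char[of 1 "of_int n" n]) simp_all

lemma emb_0: "(rat_emb 0 :: 'a) = 0" using emb_int[of 0] by simp
lemma emb_1: "(rat_emb 1 :: 'a) = 1" using emb_int[of 1] by simp

lemma emb_nat: "(rat_emb (of_nat n) :: 'a) = of_nat n" using emb_int[of "int n"] by simp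

lemma emb_inv: "r \<noteq> 0 \<Longrightarrow> (rat_emb (1/r) :: 'a) * rat_emb r = 1"
  by (simp add: emb_mult[symmetric] emb_1)

lemma p_pos: "p > 0" using prime prime_gt_0_nat by blast

lemma ppow_add: "(ppow p (m + k) :: 'a) = ppow p m * ppow p k"
proof -
  have "(of_nat p :: rat) \<noteq> 0" using p_pos by simp
  thus ?thesis unfolding ppow_def by (subst power_int_add) (auto simp: emb_mult)
qed

lemma ppow_0: "(ppow p 0 :: 'a) = 1" unfolding ppow_def by (simp add: emb_1)

lemma ppow_nat: "(ppow p (int n) :: 'a) = of_nat p ^ n"
  unfolding ppow_def using emb_nat[of "p^n"] by simp

lemma ppow_1: "(ppow p 1 :: 'a) = of_nat p" using ppow_nat[of 1] by simp

lemma ppow_neg: "(ppow p (-k) :: 'a) * ppow p k = 1"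
  using ppow_add[of "-k" k] ppow_0 by simp

lemma ax_refl: "dv a a" using pdiv unfolding p_divisibility_def divisibility_def by blast
lemma ax_trans: "dv a b \<Longrightarrow> dv b c \<Longrightarrow> dv a c" using pdiv unfolding p_divisibility_def divisibility_def by blast
lemma ax_sub: "dv a b \<Longrightarrow> dv a c \<Longrightarrow> dv a (b - c)" using pdiv unfolding p_divisibility_def divisibility_def by blast
lemma ax_mult: "dv a b \<Longrightarrow> dv (a * c) (b * c)" using pdiv unfolding p_divisibility_def divisibility_def by blast
lemma ax_01: "\<not> dv 0 1" using pdiv unfolding p_divisibility_def divisibility_def by blast
lemma ax_6: "\<not> dv 0 a \<Longrightarrow> \<not> dv (of_nat p * a) a" using pdiv unfolding p_divisibility_def by blast

lemma dv_0: "dv a 0" using ax_sub[OF ax_refl ax_refl, of a] by simp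
lemma dv_neg: "dv a b \<Longrightarrow> dv a (-b)" using ax_sub[OF dv_0, of a b] by simp
lemma dv_add: "dv a b \<Longrightarrow> dv a c \<Longrightarrow> dv a (b + c)" using ax_sub[of a b "-c"] dv_neg by simp

lemma dv_natmult: "dv a b \<Longrightarrow> dv a (of_nat n * b)"
proof (induction n)
  case 0 then show ?case by (simp add: dv_0)
next
  case (Suc n) then show ?case using dv_add[of a b "of_nat n * b"] by (simp add: algebra_simps)
qed

lemma dv_intmult: "dv a b \<Longrightarrow> dv a (of_int n * b)"
proof (cases "n \<ge> 0")
  case True
  assume "dv a b"
  then have "dv a (of_nat (nat n) * b)" by (rule dv_natmult)
  then show ?thesis using True by simp
next
  case False
  assume "dv a b"
  then have "dv a (-(of_nat (nat (-n)) * b))" by (intro dv_neg dv_natmult)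
  then show ?thesis using False by simp
qed

lemma dv_multl: "dv a b \<Longrightarrow> dv (c * a) (c * b)" using ax_mult[of a b c] by (simp add: mult.commute)

lemma one_int: "dv 1 (of_int n)" using dv_intmult[OF ax_refl, of 1 n] by simp

lemma one_mult: "dv 1 x \<Longrightarrow> dv 1 y \<Longrightarrow> dv 1 (x * y)"
  using ax_mult[of 1 x y] ax_trans[of 1 y "x*y"] by simp

lemma one_dv: "dv 1 u \<Longrightarrow> dv a (u * a)" using ax_mult[of 1 u a] by simp

lemma down: "dv (ppow p m) a \<Longrightarrow> m' \<le> m \<Longrightarrow> dv (ppow p m') a"
proof -
  assume h: "dv (ppow p m) a" "m' \<le> m"
  have e: "(ppow p m :: 'a) = ppow p (int (nat (m - m'))) * ppow p m'"
    using ppow_add[of "int (nat (m - m'))" m'] h(2) by simp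
  have "dv 1 (ppow p (int (nat (m - m'))) :: 'a)"
    unfolding ppow_nat using one_int[of "int p ^ nat (m - m')"] by simp
  from ax_mult[OF this, of "ppow p m'"] have "dv (ppow p m') (ppow p m)" by (simp add: e)
  thus ?thesis using h(1) ax_trans by blast
qed

lemma shift: "dv (ppow p m) a \<Longrightarrow> dv (ppow p (m + k)) (ppow p k * a)"
  using dv_multl[of "ppow p m" a "ppow p k"] ppow_add[of m k] by (simp add: mult.commute)

lemma shift_iff: "dv (ppow p (m + k)) (ppow p k * a) \<longleftrightarrow> dv (ppow p m) a"
proof
  assume "dv (ppow p (m + k)) (ppow p k * a)"
  from shift[OF this, of "-k"] show "dv (ppow p m) a"
    using ppow_neg[of k] by (simp add: mult.assoc[symmetric])
qed (rule shift)

lemma nonempty: "\<exists>m. dv (ppow p m) a" using arch unfolding p_archimedean_def by blast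

lemma not_p1: "\<not> dv (ppow p 1) (1::'a)" using ax_6[of 1] ax_01 ppow_1 by simp

lemma S1: "dv (ppow p m) (1::'a) \<longleftrightarrow> m \<le> 0"
proof
  assume "dv (ppow p m) (1::'a)"
  thus "m \<le> 0" using down[of m 1 1] not_p1 by (cases "m \<le> 0") auto
next
  assume "m \<le> 0" thus "dv (ppow p m) (1::'a)" using down[of 0 1 m] ax_refl ppow_0 by simp
qed

lemma dv_zero: "dv (ppow p m) 0" by (rule dv_0)

lemma W:
  assumes t: "t = 1 + int p * s" "t \<noteq> 0"
  shows "dv 1 (rat_emb (1 / of_int t) :: 'a)"
proof -
  define w where "w = (rat_emb (1 / of_int t) :: 'a)"
  have "w * of_int t = 1" unfolding w_def using emb_inv[of "of_int t"] t(2) by (simp add: emb_int)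
  hence wt: "w = 1 - of_int s * (of_nat p * w)" unfolding t(1) by (simp add: algebra_simps)
  obtain m0 where m0: "dv (ppow p m0) w" using nonempty by blast
  have "dv (ppow p (min 0 (m0 + int k))) w" for k
  proof (induction k)
    case 0 thus ?case using down[OF m0] by simp
  next
    case (Suc k)
    define j where "j = min 0 (m0 + int k)"
    have "dv (ppow p (j + 1)) (ppow p 1 * w)" using shift[OF Suc.IH[folded j_def]] .
    hence "dv (ppow p (j + 1)) (of_int s * (of_nat p * w))" unfolding ppow_1 by (rule dv_intmult)
    hence a: "dv (ppow p (min 0 (m0 + int (Suc k)))) (of_int s * (of_nat p * w))"
      by (rule down) (simp add: j_def)
    have b: "dv (ppow p (min 0 (m0 + int (Suc k)))) (1::'a)" using S1 by simp
    from ax_sub[OF b a] show ?case using wt by simp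
  qed
  moreover have "min 0 (m0 + int (nat (-m0))) = 0" by simp
  ultimately have "dv (ppow p 0) w" by metis
  thus ?thesis using ppow_0 w_def by simp
qed

lemma unit_int:
  assumes "d \<noteq> 0" "\<not> int p dvd d"
  shows "dv 1 (rat_emb (of_int n / of_int d) :: 'a)"
proof -
  have pp: "prime (int p)" using prime prime_nat_iff_prime[of "int p"] by simp
  hence "coprime (int p) d" using assms(2) by (rule prime_imp_coprime)
  hence g: "gcd (int p) d = 1" by simp
  obtain u v where uv: "u * int p + v * d = 1" using bezout_int[of "int p" d] g by auto
  define t where "t = v * d"
  have t1: "t = 1 + int p * (-u)" using uv by (simp add: t_def algebra_simps)
  have t0: "t \<noteq> 0"
  proof
    assume t00: "t = 0"
    have "u * int p = 1 - t" using uv by (simp add: t_def algebra_simps)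
    hence "1 = int p * u" using t00 by (simp add: algebra_simps)
    hence "int p dvd 1" by (rule dvdI)
    thus False using pp not_prime_unit by blast
  qed
  have v0: "v \<noteq> 0"
  proof
    assume "v = 0" hence "t = 0" by (simp add: t_def)
    thus False using t0 by simp
  qed
  have "(of_int (n*v) * (1 / of_int t) :: rat) = (of_int v * of_int n) / (of_int v * of_int d)"
    by (simp add: t_def mult.commute)
  also have "\<dots> = of_int n / of_int d" using v0 by (simp only: mult_divide_mult_cancel_left_if of_int_eq_0_iff if_False)
  finally have q: "(of_int n / of_int d :: rat) = of_int (n*v) * (1 / of_int t)" by simp
  show ?thesis unfolding q emb_mult emb_int
    by (rule one_mult[OF one_int W[OF t1 t0]])
qed

lemma decomp:
  fixes r :: rat assumes "r \<noteq> 0"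
  obtains u where "(rat_emb r :: 'a) = ppow p (padic_val p r) * rat_emb u"
    "dv 1 (rat_emb u :: 'a)" "dv 1 (rat_emb (1/u) :: 'a)" "u \<noteq> 0"
proof -
  obtain n d where q: "quotient_of r = (n, d)" by (cases "quotient_of r") auto
  have d0: "d > 0" using quotient_of_denom_pos[OF q] .
  have r: "r = of_int n / of_int d" using quotient_of_div[OF q] .
  have n0: "n \<noteq> 0" using r assms by auto
  define P where "P = int p"
  define a where "a = multiplicity P n"
  define b where "b = multiplicity P d"
  have Pnu: "\<not> is_unit P" unfolding P_def using prime prime_nat_iff_prime[of "int p"] not_prime_unit by auto
  obtain n' where n': "n = P ^ a * n'" "\<not> P dvd n'" unfolding a_def using multiplicity_decompose'[OF n0 Pnu] by blast
  have dnz: "d \<noteq> 0" using d0 by simp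
  obtain d' where d': "d = P ^ b * d'" "\<not> P dvd d'" unfolding b_def using multiplicity_decompose'[OF dnz Pnu] by blast
  have pv: "padic_val p r = int a - int b" unfolding padic_val_def q a_def b_def P_def by simp
  have n'0: "n' \<noteq> 0"
  proof
    assume "n' = 0" hence "n = 0" using n'(1) by simp
    thus False using n0 by simp
  qed
  have d'0: "d' \<noteq> 0"
  proof
    assume "d' = 0" hence "d = 0" using d'(1) by simp
    thus False using dnz by simp
  qed
  have P0: "(of_nat p :: rat) \<noteq> 0" using p_pos by simp
  define u where "u = (of_int n' / of_int d' :: rat)"
  have "(of_nat p :: rat) powi (int a - int b) = of_nat p ^ a / of_nat p ^ b"
    using P0 by (simp add: power_int_diff)
  moreover have "r = (of_nat p ^ a * of_int n') / (of_nat p ^ b * of_int d')"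
    unfolding r n'(1) d'(1) P_def by simp
  moreover have "(of_nat p ^ a * of_int n') / (of_nat p ^ b * of_int d') = (of_nat p ^ a / of_nat p ^ b) * (u::rat)"
    by (simp only: u_def times_divide_times_eq)
  ultimately have ru: "r = (of_nat p :: rat) powi (padic_val p r) * u" unfolding pv by metis
  have 1: "(rat_emb r :: 'a) = ppow p (padic_val p r) * rat_emb u"
  proof -
    have "(rat_emb r :: 'a) = rat_emb ((of_nat p :: rat) powi padic_val p r * u)" by (rule arg_cong[OF ru])
    also have "\<dots> = rat_emb ((of_nat p :: rat) powi padic_val p r) * rat_emb u" by (rule emb_mult)
    finally show ?thesis unfolding ppow_def .
  qed
  have 2: "dv 1 (rat_emb u :: 'a)" unfolding u_def using unit_int d'0 d'(2) P_def by simp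
  have "1/u = of_int d' / of_int n'" unfolding u_def by simp
  hence 3: "dv 1 (rat_emb (1/u) :: 'a)" using unit_int n'0 n'(2) P_def by simp
  have "u \<noteq> 0" using n'0 d'0 u_def by simp
  thus ?thesis using that 1 2 3 by blast
qed

lemma Sr:
  fixes r :: rat assumes "r \<noteq> 0"
  shows "dv (ppow p m) (rat_emb r * a) \<longleftrightarrow> dv (ppow p (m - padic_val p r)) a"
proof -
  obtain u where u: "(rat_emb r :: 'a) = ppow p (padic_val p r) * rat_emb u"
    "dv 1 (rat_emb u :: 'a)" "dv 1 (rat_emb (1/u) :: 'a)" "u \<noteq> 0" using decomp[OF assms] by blast
  define k where "k = padic_val p r"
  have inv: "rat_emb (1/u) * rat_emb u = (1::'a)" using emb_inv u(4) by blast
  have ui: "dv x (rat_emb u * a) \<longleftrightarrow> dv x a" for x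
  proof
    assume "dv x (rat_emb u * a)"
    moreover have "dv (rat_emb u * a) (rat_emb (1/u) * (rat_emb u * a))" by (rule one_dv[OF u(3)])
    ultimately show "dv x a" using inv ax_trans by (simp add: mult.assoc[symmetric])
  next
    assume "dv x a" thus "dv x (rat_emb u * a)" using one_dv[OF u(2)] ax_trans by blast
  qed
  have "rat_emb r * a = ppow p k * (rat_emb u * a)" using u(1) k_def by (simp add: mult.assoc)
  hence "dv (ppow p m) (rat_emb r * a) \<longleftrightarrow> dv (ppow p (m - k + k)) (ppow p k * (rat_emb u * a))" by simp
  also have "\<dots> \<longleftrightarrow> dv (ppow p (m - k)) (rat_emb u * a)" by (rule shift_iff)
  also have "\<dots> \<longleftrightarrow> dv (ppow p (m - k)) a" by (rule ui)
  finally show ?thesis using k_def by simp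
qed

lemma form: "{m. dv (ppow p m) a} = UNIV \<or> (\<exists>M. {m. dv (ppow p m) a} = {..M})"
proof (cases "\<forall>m. dv (ppow p m) a")
  case True thus ?thesis by auto
next
  case False
  then obtain M0 where M0: "\<not> dv (ppow p M0) a" by blast
  have lt: "dv (ppow p m) a \<Longrightarrow> m < M0" for m using down[of m a M0] M0 by force
  obtain m1 where m1: "dv (ppow p m1) a" using nonempty by blast
  define F where "F = {m. dv (ppow p m) a} \<inter> {m1..M0}"
  have fin: "finite F" unfolding F_def by simp
  have m1F: "m1 \<in> F" unfolding F_def using m1 lt[OF m1] by simp
  define M where "M = Max F"
  have MF: "M \<in> F" unfolding M_def using fin m1F Max_in by blast
  have "{m. dv (ppow p m) a} = {..M}"
  proof (intro set_eqI iffI)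
    fix m assume "m \<in> {m. dv (ppow p m) a}"
    hence h: "dv (ppow p m) a" by simp
    show "m \<in> {..M}"
    proof (cases "m \<ge> m1")
      case True
      hence "m \<in> F" unfolding F_def using h lt[OF h] by simp
      thus ?thesis unfolding M_def using fin by simp
    next
      case False
      moreover have "m1 \<le> M" unfolding M_def using fin m1F by simp
      ultimately show ?thesis by simp
    qed
  next
    fix m assume "m \<in> {..M}"
    thus "m \<in> {m. dv (ppow p m) a}" using down[of M a m] MF unfolding F_def by simp
  qed
  thus ?thesis by blast
qed

lemma norm_univ: "{m. dv (ppow p m) a} = UNIV \<Longrightarrow> norm_dv p dv a = 0"
proof -
  assume h: "{m. dv (ppow p m) a} = UNIV"
  have "Sup (range (\<lambda>m::int. ereal (real_of_int m))) = top"
    unfolding Sup_eq_top_iff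
  proof (intro allI impI)
    fix x :: ereal assume "x < top"
    hence "x \<noteq> \<infinity>" by (simp add: top_ereal_def)
    then obtain n :: nat where "x < ereal (real n)" using less_PInf_Ex_of_nat by blast
    moreover have "ereal (real n) = ereal (real_of_int (int n))" by simp
    ultimately show "\<exists>i\<in>range (\<lambda>m::int. ereal (real_of_int m)). x < i" by blast
  qed
  thus ?thesis unfolding norm_dv_def ord_dv_def h by (simp add: top_ereal_def)
qed

lemma norm_fin: "{m. dv (ppow p m) a} = {..M} \<Longrightarrow> norm_dv p dv a = real p powr (- real_of_int M)"
proof -
  assume h: "{m. dv (ppow p m) a} = {..M}"
  have "Sup ((\<lambda>m::int. ereal (real_of_int m)) ` {..M}) = ereal (real_of_int M)"
    by (rule Sup_eqI) auto
  thus ?thesis unfolding norm_dv_def ord_dv_def h by simp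
qed

lemma rp: "real p > 1" using prime prime_gt_1_nat by simp

lemma bound: "{..K} \<subseteq> {m. dv (ppow p m) c} \<Longrightarrow> norm_dv p dv c \<le> real p powr (- real_of_int K)"
proof -
  assume h: "{..K} \<subseteq> {m. dv (ppow p m) c}"
  from form[of c] show ?thesis
  proof
    assume "{m. dv (ppow p m) c} = UNIV" thus ?thesis using norm_univ by simp
  next
    assume "\<exists>M. {m. dv (ppow p m) c} = {..M}"
    then obtain L where L: "{m. dv (ppow p m) c} = {..L}" by blast
    hence "K \<le> L" using h by auto
    thus ?thesis using norm_fin[OF L] rp by simp
  qed
qed

lemma norm_nonneg: "norm_dv p dv c \<ge> 0"
  using form[of c] norm_univ norm_fin by fastforce

lemma normA: "norm_dv p dv (a + b) \<le> max (norm_dv p dv a) (norm_dv p dv b)"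
proof -
  have sub: "dv (ppow p m) a \<Longrightarrow> dv (ppow p m) b \<Longrightarrow> dv (ppow p m) (a + b)" for m
    by (rule dv_add)
  from form[of a] show ?thesis
  proof
    assume A: "{m. dv (ppow p m) a} = UNIV"
    from form[of b] show ?thesis
    proof
      assume B: "{m. dv (ppow p m) b} = UNIV"
      have "{m. dv (ppow p m) (a + b)} = UNIV" using A B sub by auto
      thus ?thesis using norm_univ A B by simp
    next
      assume "\<exists>K. {m. dv (ppow p m) b} = {..K}"
      then obtain K where B: "{m. dv (ppow p m) b} = {..K}" by blast
      have "{..K} \<subseteq> {m. dv (ppow p m) (a + b)}" using A B sub by auto
      thus ?thesis using bound norm_fin[OF B] by fastforce
    qed
  next
    assume "\<exists>M. {m. dv (ppow p m) a} = {..M}"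
    then obtain M where A: "{m. dv (ppow p m) a} = {..M}" by blast
    from form[of b] show ?thesis
    proof
      assume B: "{m. dv (ppow p m) b} = UNIV"
      have "{..M} \<subseteq> {m. dv (ppow p m) (a + b)}" using A B sub by auto
      thus ?thesis using bound norm_fin[OF A] by fastforce
    next
      assume "\<exists>K. {m. dv (ppow p m) b} = {..K}"
      then obtain K where B: "{m. dv (ppow p m) b} = {..K}" by blast
      have "{..min M K} \<subseteq> {m. dv (ppow p m) (a + b)}" using A B sub unfolding set_eq_iff by auto
      hence "norm_dv p dv (a + b) \<le> real p powr (- real_of_int (min M K))" by (rule bound)
      moreover have "real p powr (- real_of_int (min M K)) \<le> max (real p powr (- real_of_int M)) (real p powr (- real_of_int K))"
        by (cases "M \<le> K") (auto simp: min_def)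
      ultimately show ?thesis using norm_fin[OF A] norm_fin[OF B] by linarith
    qed
  qed
qed

lemma prod_sub: "dv (ppow p m) a \<Longrightarrow> dv (ppow p n) b \<Longrightarrow> dv (ppow p (m + n)) (a * b)"
proof -
  assume h: "dv (ppow p m) a" "dv (ppow p n) b"
  have 1: "dv (ppow p m * b) (a * b)" using ax_mult[OF h(1)] .
  have "dv (ppow p n * ppow p m) (b * ppow p m)" using ax_mult[OF h(2)] .
  hence 2: "dv (ppow p (m + n)) (ppow p m * b)" using ppow_add[of m n] by (simp add: mult.commute)
  show ?thesis using ax_trans[OF 2 1] .
qed

lemma univ_prod: "{m. dv (ppow p m) a} = UNIV \<Longrightarrow> {m. dv (ppow p m) (a * b)} = UNIV"
proof -
  assume A: "{m. dv (ppow p m) a} = UNIV"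
  obtain n where n: "dv (ppow p n) b" using nonempty by blast
  have "dv (ppow p m) (a * b)" for m
    using prod_sub[of "m - n" a n b] A n by auto
  thus ?thesis by auto
qed

lemma normB: "norm_dv p dv (a * b) \<le> norm_dv p dv a * norm_dv p dv b"
proof -
  have nn: "0 \<le> norm_dv p dv a * norm_dv p dv b" using norm_nonneg by simp
  from form[of a] show ?thesis
  proof
    assume A: "{m. dv (ppow p m) a} = UNIV"
    thus ?thesis using univ_prod[OF A] norm_univ nn by simp
  next
    assume "\<exists>M. {m. dv (ppow p m) a} = {..M}"
    then obtain M where A: "{m. dv (ppow p m) a} = {..M}" by blast
    from form[of b] show ?thesis
    proof
      assume B: "{m. dv (ppow p m) b} = UNIV"
      have "{m. dv (ppow p m) (b * a)} = UNIV" using univ_prod[OF B] .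
      thus ?thesis using norm_univ nn by (simp add: mult.commute)
    next
      assume "\<exists>K. {m. dv (ppow p m) b} = {..K}"
      then obtain K where B: "{m. dv (ppow p m) b} = {..K}" by blast
      have "{..M + K} \<subseteq> {m. dv (ppow p m) (a * b)}"
      proof
        fix m assume "m \<in> {..M + K}"
        hence "m - K \<in> {..M}" by simp
        hence "dv (ppow p (m - K)) a" using A by blast
        moreover have "dv (ppow p K) b" using B by blast
        ultimately show "m \<in> {m. dv (ppow p m) (a * b)}" using prod_sub[of "m - K" a K b] by simp
      qed
      hence "norm_dv p dv (a * b) \<le> real p powr (- real_of_int (M + K))" by (rule bound)
      also have "\<dots> = real p powr (- real_of_int M) * real p powr (- real_of_int K)"
        by (simp add: powr_add[symmetric])
      finally show ?thesis using norm_fin[OF A] norm_fin[OF B] by simp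
    qed
  qed
qed

lemma normD: "norm_dv p dv (rat_emb r * a) = padic_abs p r * norm_dv p dv a"
proof (cases "r = 0")
  case True
  have "{m. dv (ppow p m) (rat_emb r * a)} = UNIV" using True emb_0 dv_0 by simp
  thus ?thesis using norm_univ True by (simp add: padic_abs_def)
next
  case False
  define k where "k = padic_val p r"
  have S: "dv (ppow p m) (rat_emb r * a) \<longleftrightarrow> dv (ppow p (m - k)) a" for m
    using Sr[OF False] k_def by simp
  have pa: "padic_abs p r = real p powr (- real_of_int k)" using False k_def by (simp add: padic_abs_def)
  from form[of a] show ?thesis
  proof
    assume A: "{m. dv (ppow p m) a} = UNIV"
    hence "{m. dv (ppow p m) (rat_emb r * a)} = UNIV" using S by auto
    thus ?thesis using norm_univ A by simp
  next
    assume "\<exists>M. {m. dv (ppow p m) a} = {..M}"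
    then obtain M where A: "{m. dv (ppow p m) a} = {..M}" by blast
    have "{m. dv (ppow p m) (rat_emb r * a)} = {..M + k}"
    proof (intro set_eqI)
      fix m
      have "m \<in> {m. dv (ppow p m) (rat_emb r * a)} \<longleftrightarrow> m - k \<in> {m. dv (ppow p m) a}" using S by simp
      also have "\<dots> \<longleftrightarrow> m \<in> {..M + k}" using A by auto
      finally show "m \<in> {m. dv (ppow p m) (rat_emb r * a)} \<longleftrightarrow> m \<in> {..M + k}" .
    qed
    hence "norm_dv p dv (rat_emb r * a) = real p powr (- real_of_int (M + k))" by (rule norm_fin)
    also have "\<dots> = real p powr (- real_of_int k) * real p powr (- real_of_int M)"
      by (simp add: powr_add[symmetric] algebra_simps)
    finally show ?thesis using pa norm_fin[OF A] by simp
  qed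
qed

lemma norm1: "norm_dv p dv (1::'a) = 1"
proof -
  have "{m. dv (ppow p m) (1::'a)} = {..0}" using S1 by auto
  hence "norm_dv p dv (1::'a) = real p powr (- real_of_int 0)" by (rule norm_fin)
  thus ?thesis using p_pos by simp
qed

lemma normC: "norm_dv p dv (rat_emb r :: 'a) = padic_abs p r"
  using normD[of r 1] norm1 by simp

end

theorem lemma4p2:
  fixes dv :: "'a::comm_ring_1 \<Rightarrow> 'a \<Rightarrow> bool" and p :: nat
  assumes "prime p"
    and "contains_rat TYPE('a)"
    and "p_divisibility p dv"
    and "p_archimedean p dv"
  shows "(\<forall>a b. norm_dv p dv (a + b) \<le> max (norm_dv p dv a) (norm_dv p dv b)) \<and>
         (\<forall>a b. norm_dv p dv (a * b) \<le> norm_dv p dv a * norm_dv p dv b) \<and>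
         (\<forall>r. norm_dv p dv (rat_emb r :: 'a) = padic_abs p r) \<and>
         (\<forall>r a. norm_dv p dv (rat_emb r * a) = padic_abs p r * norm_dv p dv a)"
proof -
  interpret L p dv using assms by unfold_locales
  show ?thesis using normA normB normC normD by blast
qed

end
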